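(* Assume (A1)–(A4) below. Then $\alpha_t(\ell)\ge0$ for every compliance type $t\in\mathcal T$ and every instrument $\ell=1,\dots,L$.
   Context: We observe i.i.d. $(Y_i,D_i,\mathbf Z_i)$, $D_i\in\{0,1\}$, $\mathbf Z_i=(Z_{1i},\dots,Z_{Li})'\in\{0,1\}^L$, $L\ge2$. Units have potential outcomes $Y_i(0),Y_i(1)$ and a compliance type $D_i(\cdot):\{0,1\}^L\to\{0,1\}$ with $D_i=D_i(\mathbf Z_i)$; $\mathcal T$ is the set of types, $\theta_t=P(D_i(\cdot)=t)$, and $t(z_\ell,z_{-\ell})$ is type $t$'s treatment at the instrument vector with $\ell$-th coordinate $z_\ell$, others $z_{-\ell}$. $p_\ell=P(Z_{\ell i}=1)$, $\pi_\ell=\mathbb E[D_i\mid Z_{\ell i}=1]-\mathbb E[D_i\mid Z_{\ell i}=0]$, $\Sigma_Z=\mathrm{Var}(\mathbf Z_i)$, $q_\ell(z_{-\ell})=P(Z_{-\ell}=z_{-\ell}\mid Z_\ell=1)$, $q^0_\ell(z_{-\ell})=P(Z_{-\ell}=z_{-\ell}\mid Z_\ell=0)$, $\varphi_t(\ell)=\sum_{z_{-\ell}}[t(1,z_{-\ell})q_\ell(z_{-\ell})-t(0,z_{-\ell})q^0_\ell(z_{-\ell})]$, and $\alpha_t(\ell)=\theta_t\varphi_t(\ell)/\pi_\ell$. Assumptions: (A1) $(Y_i(0),Y_i(1),D_i(\cdot))$ independent of $\mathbf Z_i$. (A2) $D_i(z)$ nondecreasing in each coordinate for every $i$. (A3)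 $p_\ell>0$, $\pi_\ell>0$ for all $\ell$; $\Sigma_Z$ positive definite. (A4) Positive regression dependence: for each $\ell$, $\mathbb E[f(Z_{-\ell})\mid Z_\ell=1]\ge\mathbb E[f(Z_{-\ell})\mid Z_\ell=0]$ for every nondecreasing $f:\{0,1\}^{L-1}\to\mathbb R$. *)

theory Defs
  imports "HOL-Probability.Probability"
begin

text \<open>Instruments are indexed 0..L-1 (paper: 1..L).
An instrument vector in {0,1}^L is a function nat => bool that is False beyond L.
A compliance type is an (extensional) map from instrument vectors to {0,1}.
The vector z_{-l} is encoded as an instrument vector whose l-th coordinate is False.\<close>

definition Zvecs :: "nat \<Rightarrow> (nat \<Rightarrow> bool) set" where
  "Zvecs L = {z. \<forall>i\<ge>L. \<not> z i}"

definition Types :: "nat \<Rightarrow> ((nat \<Rightarrow> bool) \<Rightarrow> bool) set" where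
  "Types L = Zvecs L \<rightarrow>\<^sub>E (UNIV :: bool set)"

definition Rest :: "nat \<Rightarrow> nat \<Rightarrow> (nat \<Rightarrow> bool) set" where
  "Rest L l = {z \<in> Zvecs L. \<not> z l}"

definition mono_type :: "nat \<Rightarrow> ((nat \<Rightarrow> bool) \<Rightarrow> bool) \<Rightarrow> bool" where
  "mono_type L t \<longleftrightarrow> (\<forall>z\<in>Zvecs L. \<forall>z'\<in>Zvecs L. z \<le> z' \<longrightarrow> (t z \<longrightarrow> t z'))"

definition zev :: "'a measure \<Rightarrow> ('a \<Rightarrow> nat \<Rightarrow> bool) \<Rightarrow> nat \<Rightarrow> bool \<Rightarrow> 'a set" where
  "zev M Z l b = {\<omega> \<in> space M. Z \<omega> l = b}"

definition cexp :: "'a measure \<Rightarrow> 'a set \<Rightarrow> ('a \<Rightarrow> real) \<Rightarrow> real" where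
  "cexp M A X = (\<integral>\<omega>. indicator A \<omega> * X \<omega> \<partial>M) / measure M A"

definition cprob :: "'a measure \<Rightarrow> 'a set \<Rightarrow> 'a set \<Rightarrow> real" where
  "cprob M B A = measure M (B \<inter> A) / measure M A"

definition Dobs :: "('a \<Rightarrow> (nat \<Rightarrow> bool) \<Rightarrow> bool) \<Rightarrow> ('a \<Rightarrow> nat \<Rightarrow> bool) \<Rightarrow> 'a \<Rightarrow> real" where
  "Dobs Dt Z \<omega> = of_bool (Dt \<omega> (Z \<omega>))"

definition p_inst :: "'a measure \<Rightarrow> ('a \<Rightarrow> nat \<Rightarrow> bool) \<Rightarrow> nat \<Rightarrow> real" where
  "p_inst M Z l = measure M (zev M Z l True)"

definition pi_inst :: "'a measure \<Rightarrow> ('a \<Rightarrow> (nat \<Rightarrow> bool) \<Rightarrow> bool) \<Rightarrow> ('a \<Rightarrow> nat \<Rightarrow> bool) \<Rightarrow> nat \<Rightarrow> real" where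
  "pi_inst M Dt Z l = cexp M (zev M Z l True) (Dobs Dt Z) - cexp M (zev M Z l False) (Dobs Dt Z)"

definition covZ :: "'a measure \<Rightarrow> ('a \<Rightarrow> nat \<Rightarrow> bool) \<Rightarrow> nat \<Rightarrow> nat \<Rightarrow> real" where
  "covZ M Z k m =
     (\<integral>\<omega>. of_bool (Z \<omega> k) * of_bool (Z \<omega> m) \<partial>M)
     - (\<integral>\<omega>. of_bool (Z \<omega> k) \<partial>M) * (\<integral>\<omega>. of_bool (Z \<omega> m) \<partial>M)"

definition pos_def_covZ :: "'a measure \<Rightarrow> nat \<Rightarrow> ('a \<Rightarrow> nat \<Rightarrow> bool) \<Rightarrow> bool" where
  "pos_def_covZ M L Z \<longleftrightarrow>
     (\<forall>v :: nat \<Rightarrow> real. (\<exists>k<L. v k \<noteq> 0) \<longrightarrow>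
        (\<Sum>k<L. \<Sum>m<L. v k * covZ M Z k m * v m) > 0)"

definition q1 :: "'a measure \<Rightarrow> ('a \<Rightarrow> nat \<Rightarrow> bool) \<Rightarrow> nat \<Rightarrow> (nat \<Rightarrow> bool) \<Rightarrow> real" where
  "q1 M Z l zm = cprob M {\<omega> \<in> space M. (Z \<omega>)(l := False) = zm} (zev M Z l True)"

definition q0 :: "'a measure \<Rightarrow> ('a \<Rightarrow> nat \<Rightarrow> bool) \<Rightarrow> nat \<Rightarrow> (nat \<Rightarrow> bool) \<Rightarrow> real" where
  "q0 M Z l zm = cprob M {\<omega> \<in> space M. (Z \<omega>)(l := False) = zm} (zev M Z l False)"

definition theta :: "'a measure \<Rightarrow> ('a \<Rightarrow> (nat \<Rightarrow> bool) \<Rightarrow> bool) \<Rightarrow> ((nat \<Rightarrow> bool) \<Rightarrow> bool) \<Rightarrow> real" where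
  "theta M Dt t = measure M {\<omega> \<in> space M. Dt \<omega> = t}"

definition phi :: "'a measure \<Rightarrow> nat \<Rightarrow> ('a \<Rightarrow> nat \<Rightarrow> bool) \<Rightarrow> ((nat \<Rightarrow> bool) \<Rightarrow> bool) \<Rightarrow> nat \<Rightarrow> real" where
  "phi M L Z t l = (\<Sum>zm\<in>Rest L l.
      of_bool (t (zm(l := True))) * q1 M Z l zm - of_bool (t zm) * q0 M Z l zm)"

definition alpha :: "'a measure \<Rightarrow> nat \<Rightarrow> ('a \<Rightarrow> (nat \<Rightarrow> bool) \<Rightarrow> bool) \<Rightarrow> ('a \<Rightarrow> nat \<Rightarrow> bool)
      \<Rightarrow> ((nat \<Rightarrow> bool) \<Rightarrow> bool) \<Rightarrow> nat \<Rightarrow> real" where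
  "alpha M L Dt Z t l = theta M Dt t * phi M L Z t l / pi_inst M Dt Z l"

end

theory Submission
  imports Defs
begin

lemma finite_Zvecs: "finite (Zvecs L)"
proof -
  have "Zvecs L \<subseteq> (\<lambda>S i. i \<in> S) ` Pow {..<L}"
  proof
    fix z assume "z \<in> Zvecs L"
    then have "z = (\<lambda>i. i \<in> {i. i < L \<and> z i})"
      unfolding Zvecs_def by (auto simp: fun_eq_iff) (meson not_le)
    then show "z \<in> (\<lambda>S i. i \<in> S) ` Pow {..<L}" by blast
  qed
  then show ?thesis by (rule finite_subset) simp
qed

lemma finite_Rest: "finite (Rest L l)"
  using finite_Zvecs unfolding Rest_def by simp

lemma cexp_sum:
  assumes prob: "prob_space M"
    and Z_meas: "Z \<in> M \<rightarrow>\<^sub>M count_space (Zvecs L)"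
    and A: "A \<in> sets M"
  shows "cexp M A (\<lambda>\<omega>. f ((Z \<omega>)(l := False))) =
    (\<Sum>zm\<in>Rest L l. f zm * cprob M {\<omega> \<in> space M. (Z \<omega>)(l := False) = zm} A)"
proof -
  interpret prob_space M by (rule prob)
  define B where "B zm = {\<omega> \<in> space M. (Z \<omega>)(l := False) = zm}" for zm
  have gm: "(\<lambda>\<omega>. (Z \<omega>)(l := False)) \<in> M \<rightarrow>\<^sub>M count_space UNIV"
  proof -
    have "(\<lambda>z::nat\<Rightarrow>bool. z(l := False)) \<circ> Z \<in> M \<rightarrow>\<^sub>M count_space UNIV"
      by (rule measurable_comp[OF Z_meas]) simp
    then show ?thesis by (simp add: o_def)
  qed
  have Bs: "B zm \<in> sets M" for zm
  proof -
    have "B zm = (\<lambda>\<omega>. (Z \<omega>)(l := False)) -` {zm} \<inter> space M" unfolding B_def by auto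
    also have "\<dots> \<in> sets M" by (rule measurable_sets[OF gm]) simp
    finally show ?thesis .
  qed
  have Zin: "\<omega> \<in> space M \<Longrightarrow> Z \<omega> \<in> Zvecs L" for \<omega>
    using Z_meas by (auto simp: measurable_def)
  have ptw: "indicator A \<omega> * f ((Z \<omega>)(l := False)) =
      (\<Sum>zm\<in>Rest L l. f zm * indicator (B zm \<inter> A) \<omega>)" if "\<omega> \<in> space M" for \<omega>
  proof -
    let ?g = "(Z \<omega>)(l := False)"
    have gR: "?g \<in> Rest L l" using Zin[OF that] unfolding Rest_def Zvecs_def by auto
    have "(\<Sum>zm\<in>Rest L l. f zm * indicator (B zm \<inter> A) \<omega>) =
          (\<Sum>zm\<in>Rest L l. if zm = ?g then f ?g * indicator A \<omega> else 0)"
      by (rule sum.cong) (auto simp: B_def indicator_def that)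
    also have "\<dots> = f ?g * indicator A \<omega>"
      using gR finite_Rest by (simp add: sum.delta')
    finally show ?thesis by simp
  qed
  have "(\<integral>\<omega>. indicator A \<omega> * f ((Z \<omega>)(l := False)) \<partial>M) =
        (\<integral>\<omega>. (\<Sum>zm\<in>Rest L l. f zm * indicator (B zm \<inter> A) \<omega>) \<partial>M)"
    by (rule Bochner_Integration.integral_cong[OF refl]) (simp add: ptw)
  also have "\<dots> = (\<Sum>zm\<in>Rest L l. (\<integral>\<omega>. f zm * indicator (B zm \<inter> A) \<omega> \<partial>M))"
    by (rule Bochner_Integration.integral_sum) (auto intro!: integrable_mult_right integrable_real_indicator Bs A simp: emeasure_eq_measure)
  also have "\<dots> = (\<Sum>zm\<in>Rest L l. f zm * measure M (B zm \<inter> A))"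
    using Bs A by (simp add: integral_indicator emeasure_eq_measure)
  finally show ?thesis
    unfolding cexp_def cprob_def B_def[symmetric] by (simp add: sum_divide_distrib)
qed

theorem proposition2:
  fixes M :: "'a measure" and L :: nat
    and Y0 Y1 :: "'a \<Rightarrow> real"
    and Dt :: "'a \<Rightarrow> (nat \<Rightarrow> bool) \<Rightarrow> bool"
    and Z :: "'a \<Rightarrow> nat \<Rightarrow> bool"
  assumes prob: "prob_space M"
    and L2: "L \<ge> 2"
    and Y0_meas: "Y0 \<in> borel_measurable M"
    and Y1_meas: "Y1 \<in> borel_measurable M"
    and Dt_meas: "Dt \<in> M \<rightarrow>\<^sub>M count_space (Types L)"
    and Z_meas: "Z \<in> M \<rightarrow>\<^sub>M count_space (Zvecs L)"
    and A1: "prob_space.indep_set M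
               {(\<lambda>\<omega>. (Y0 \<omega>, Y1 \<omega>, Dt \<omega>)) -` A \<inter> space M | A.
                  A \<in> sets (borel \<Otimes>\<^sub>M (borel \<Otimes>\<^sub>M count_space (Types L)))}
               {Z -` B \<inter> space M | B. B \<in> sets (count_space (Zvecs L))}"
    and A2: "\<forall>\<omega>\<in>space M. mono_type L (Dt \<omega>)"
    and A3_p: "\<forall>l<L. p_inst M Z l > 0"
    and A3_pi: "\<forall>l<L. pi_inst M Dt Z l > 0"
    and A3_cov: "pos_def_covZ M L Z"
    and A4: "\<forall>l<L. \<forall>f :: (nat \<Rightarrow> bool) \<Rightarrow> real.
               (\<forall>z\<in>Rest L l. \<forall>z'\<in>Rest L l. z \<le> z' \<longrightarrow> f z \<le> f z') \<longrightarrow>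
               cexp M (zev M Z l True) (\<lambda>\<omega>. f ((Z \<omega>)(l := False)))
                 \<ge> cexp M (zev M Z l False) (\<lambda>\<omega>. f ((Z \<omega>)(l := False)))"
  shows "\<forall>t\<in>Types L. \<forall>l<L. alpha M L Dt Z t l \<ge> 0"
proof (intro ballI allI impI)
  fix t l assume t: "t \<in> Types L" and l: "l < L"
  interpret prob_space M by (rule prob)
  have pi: "pi_inst M Dt Z l > 0" using A3_pi l by auto
  show "alpha M L Dt Z t l \<ge> 0"
  proof (cases "\<exists>\<omega>\<in>space M. Dt \<omega> = t")
    case False
    then have e: "{\<omega> \<in> space M. Dt \<omega> = t} = {}" by auto
    show ?thesis unfolding alpha_def theta_def e by simp
  next
    case True
    then have mt: "mono_type L t" using A2 by auto
    have zevs: "zev M Z l b \<in> sets M" for b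
    proof -
      have "zev M Z l b = Z -` {z \<in> Zvecs L. z l = b} \<inter> space M"
        using Z_meas by (auto simp: zev_def measurable_def)
      also have "\<dots> \<in> sets M" by (rule measurable_sets[OF Z_meas]) auto
      finally show ?thesis .
    qed
    define f where "f zm = (of_bool (t zm) :: real)" for zm
    have fmono: "\<forall>z\<in>Rest L l. \<forall>z'\<in>Rest L l. z \<le> z' \<longrightarrow> f z \<le> f z'"
      using mt unfolding f_def mono_type_def Rest_def by auto
    have q1nn: "q1 M Z l zm \<ge> 0" for zm by (simp add: q1_def cprob_def)
    have step: "of_bool (t (zm(l := True))) * q1 M Z l zm - of_bool (t zm) * q0 M Z l zm
        \<ge> f zm * q1 M Z l zm - f zm * q0 M Z l zm" if zm: "zm \<in> Rest L l" for zm
    proof -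
      have "zm(l := True) \<in> Zvecs L" using zm l unfolding Rest_def Zvecs_def by auto
      moreover have "zm \<le> zm(l := True)" by (simp add: le_fun_def)
      ultimately have "t zm \<longrightarrow> t (zm(l := True))"
        using mt zm unfolding mono_type_def Rest_def by auto
      then have "of_bool (t (zm(l := True))) \<ge> (f zm :: real)" by (auto simp: f_def)
      then have "of_bool (t (zm(l := True))) * q1 M Z l zm \<ge> f zm * q1 M Z l zm"
        using q1nn[of zm] by (rule mult_right_mono)
      moreover have eq: "of_bool (t zm) = f zm" by (simp add: f_def)
      ultimately show ?thesis unfolding eq by linarith
    qed
    have h1: "phi M L Z t l \<ge> (\<Sum>zm\<in>Rest L l. f zm * q1 M Z l zm - f zm * q0 M Z l zm)"
      unfolding phi_def by (rule sum_mono) (rule step)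
    have h2: "(\<Sum>zm\<in>Rest L l. f zm * q1 M Z l zm - f zm * q0 M Z l zm) = cexp M (zev M Z l True) (\<lambda>\<omega>. f ((Z \<omega>)(l := False)))
                 - cexp M (zev M Z l False) (\<lambda>\<omega>. f ((Z \<omega>)(l := False)))"
      by (simp add: cexp_sum[OF prob Z_meas zevs] sum_subtractf q1_def q0_def)
    have h3: "cexp M (zev M Z l True) (\<lambda>\<omega>. f ((Z \<omega>)(l := False)))
                 - cexp M (zev M Z l False) (\<lambda>\<omega>. f ((Z \<omega>)(l := False))) \<ge> 0" using A4 l fmono by auto
    have "phi M L Z t l \<ge> 0" using h1 h2 h3 by linarith
    moreover have "theta M Dt t \<ge> 0" by (simp add: theta_def)
    ultimately show ?thesis using pi by (simp add: alpha_def)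
  qed
qed

end
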